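(* If $(X_1,X_2)$ is an extensible pair, then $\gcd(\Delta_1\Delta_2,\det Z_k)=1$ for all $k\ge1$.
   Context: A marked Dynkin diagram $(X,\xi)$ is the Dynkin diagram of a symmetrizable generalized Cartan matrix $C(X)$ with a distinguished node $\xi$; $\det X:=\det C(X)$; $X(-1)$ is $X$ with $\xi$ and its incident edges deleted ($\det$ of the empty diagram is $1$); $\Delta_X=\det X-\det X(-1)$, and $\Delta_i:=\Delta_{X_i}$. A pair $(X_1,\xi_1),(X_2,\xi_2)$ of marked Dynkin diagrams is an extensible pair if $\det X_i\neq0$, $\Delta_i\ne0$, $\gcd(\det X_i,\Delta_i)=1$ for $i=1,2$, and $\gcd(\Delta_1,\Delta_2)=1$. $Z_k=Z_k(X_1,X_2)$ is obtained from the disjoint union of $X_1$, a path $A_k$ with nodes $1,\dots,k$ and $X_2$ by adding simple edges $\xi_1$—$1$ and $k$—$\xi_2$; $\det Z_k$ is the determinant of its Cartan matrix. *)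

theory Defs
  imports "Jordan_Normal_Form.Determinant"
begin

text \<open>A (marked) Dynkin diagram is identified with its generalized Cartan matrix,
an integer square matrix; nodes are the indices 0..n-1.\<close>

definition gen_cartan :: "int mat \<Rightarrow> bool" where
  "gen_cartan A \<longleftrightarrow> dim_row A = dim_col A \<and>
     (\<forall>i < dim_row A. A $$ (i,i) = 2) \<and>
     (\<forall>i < dim_row A. \<forall>j < dim_row A. i \<noteq> j \<longrightarrow> A $$ (i,j) \<le> 0) \<and>
     (\<forall>i < dim_row A. \<forall>j < dim_row A. A $$ (i,j) = 0 \<longleftrightarrow> A $$ (j,i) = 0)"

definition symmetrizable :: "int mat \<Rightarrow> bool" where
  "symmetrizable A \<longleftrightarrow> (\<exists>d :: nat \<Rightarrow> real. (\<forall>i < dim_row A. d i > 0) \<and>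
     (\<forall>i < dim_row A. \<forall>j < dim_row A. d i * real_of_int (A $$ (i,j)) = d j * real_of_int (A $$ (j,i))))"

definition marked_dynkin :: "int mat \<Rightarrow> nat \<Rightarrow> bool" where
  "marked_dynkin A \<xi> \<longleftrightarrow> gen_cartan A \<and> symmetrizable A \<and> \<xi> < dim_row A"

definition del_node :: "int mat \<Rightarrow> nat \<Rightarrow> int mat" where
  "del_node A \<xi> = mat_delete A \<xi> \<xi>"

definition Delta :: "int mat \<Rightarrow> nat \<Rightarrow> int" where
  "Delta A \<xi> = det A - det (del_node A \<xi>)"

definition extensible_pair :: "int mat \<Rightarrow> nat \<Rightarrow> int mat \<Rightarrow> nat \<Rightarrow> bool" where
  "extensible_pair A1 \<xi>1 A2 \<xi>2 \<longleftrightarrow> marked_dynkin A1 \<xi>1 \<and> marked_dynkin A2 \<xi>2 \<and>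
     det A1 \<noteq> 0 \<and> Delta A1 \<xi>1 \<noteq> 0 \<and> gcd (det A1) (Delta A1 \<xi>1) = 1 \<and>
     det A2 \<noteq> 0 \<and> Delta A2 \<xi>2 \<noteq> 0 \<and> gcd (det A2) (Delta A2 \<xi>2) = 1 \<and>
     gcd (Delta A1 \<xi>1) (Delta A2 \<xi>2) = 1"

text \<open>Cartan matrix of Z_k: nodes of X1 are 0..n1-1, path nodes n1..n1+k-1
 (path node m is index n1+m-1), nodes of X2 are n1+k..n1+k+n2-1;
 simple edges \<xi>1 -- (path node 1) and (path node k) -- \<xi>2.\<close>
definition Zk :: "int mat \<Rightarrow> nat \<Rightarrow> int mat \<Rightarrow> nat \<Rightarrow> nat \<Rightarrow> int mat" where
  "Zk A1 \<xi>1 A2 \<xi>2 k = (let n1 = dim_row A1; n2 = dim_row A2; N = n1 + k + n2 in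
     mat N N (\<lambda>(i,j).
       if i < n1 \<and> j < n1 then A1 $$ (i,j)
       else if n1 + k \<le> i \<and> n1 + k \<le> j then A2 $$ (i - (n1+k), j - (n1+k))
       else if n1 \<le> i \<and> i < n1 + k \<and> n1 \<le> j \<and> j < n1 + k then
         (if i = j then 2 else if i = j + 1 \<or> j = i + 1 then -1 else 0)
       else if (i = \<xi>1 \<and> j = n1) \<or> (i = n1 \<and> j = \<xi>1) then -1
       else if (i = n1 + k - 1 \<and> j = n1 + k + \<xi>2) \<or> (j = n1 + k - 1 \<and> i = n1 + k + \<xi>2) then -1
       else 0))"

end

theory Submission
  imports Defs
begin


lemma det_split:
  fixes f :: "nat \<times> nat \<Rightarrow> 'a :: comm_ring_1"
  assumes k: "k < n" and fk: "\<And>j. j < n \<Longrightarrow> f (k,j) = g j + h j"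
  shows "det (mat n n f) = det (mat n n (\<lambda>(i,j). if i = k then g j else f (i,j)))
     + det (mat n n (\<lambda>(i,j). if i = k then h j else f (i,j)))"
proof -
  let ?c = "\<lambda>i. vec n (\<lambda>j. f (i,j))"
  let ?a = "\<lambda>i. vec n g" let ?b = "\<lambda>i. vec n h"
  have e1: "mat n n f = mat\<^sub>r n n (\<lambda>i. if i = k then ?a i + ?b i else ?c i)"
    by (rule eq_matI, auto simp: fk)
  have e2: "mat n n (\<lambda>(i,j). if i = k then g j else f (i,j)) = mat\<^sub>r n n (\<lambda>i. if i = k then ?a i else ?c i)"
    by (rule eq_matI, auto)
  have e3: "mat n n (\<lambda>(i,j). if i = k then h j else f (i,j)) = mat\<^sub>r n n (\<lambda>i. if i = k then ?b i else ?c i)"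
    by (rule eq_matI, auto)
  show ?thesis unfolding e1 e2 e3
    by (rule det_row_add[OF _ _ _ k], auto)
qed

definition glue :: "int mat \<Rightarrow> nat \<Rightarrow> int mat \<Rightarrow> nat \<Rightarrow> int mat" where
  "glue A p B q = mat (dim_row A + dim_row B) (dim_row A + dim_row B) (\<lambda>(i,j).
     if i < dim_row A \<and> j < dim_row A then A $$ (i,j)
     else if dim_row A \<le> i \<and> dim_row A \<le> j then B $$ (i - dim_row A, j - dim_row A)
     else if (i = p \<and> j = dim_row A + q) \<or> (i = dim_row A + q \<and> j = p) then -1 else 0)"

lemma det_unit_row:
  fixes A :: "int mat"
  assumes A: "A \<in> carrier_mat n n" and p: "p < n"
  shows "det (mat n n (\<lambda>(i,j). if i = p then (if j = p then c else 0) else A $$ (i,j)))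
     = c * det (mat_delete A p p)"
proof -
  let ?A = "mat n n (\<lambda>(i,j). if i = p then (if j = p then c else 0) else A $$ (i,j))"
  have "det ?A = (\<Sum>j<n. ?A $$ (p,j) * cofactor ?A p j)"
    by (rule laplace_expansion_row[OF _ p], auto)
  also have "\<dots> = (\<Sum>j\<in>{p}. ?A $$ (p,j) * cofactor ?A p j)"
    by (rule sum.mono_neutral_right, insert p, auto)
  also have "\<dots> = c * cofactor ?A p p" using p by simp
  also have "mat_delete ?A p p = mat_delete A p p"
    by (rule eq_matI, insert A p, auto simp: mat_delete_def)
  hence "cofactor ?A p p = det (mat_delete A p p)" unfolding cofactor_def by simp
  finally show ?thesis .
qed

lemma det_zero_row:
  fixes A :: "int mat"
  assumes A: "A \<in> carrier_mat n n" and p: "p < n"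
  shows "det (mat n n (\<lambda>(i,j). if i = p then 0 else A $$ (i,j))) = 0"
proof -
  have "mat n n (\<lambda>(i,j). if i = p then 0 else A $$ (i,j)) = 
     mat n n (\<lambda>(i,j). if i = p then (if j = p then 0 else 0) else A $$ (i,j))" by (rule eq_matI) auto
  thus ?thesis using det_unit_row[OF A p, of 0] by simp
qed

lemma det_glue:
  fixes A B :: "int mat"
  assumes A: "A \<in> carrier_mat n n" and B: "B \<in> carrier_mat m m" and p: "p < n" and q: "q < m"
  shows "det (glue A p B q) = det A * det B - det (mat_delete A p p) * det (mat_delete B q q)"
proof -
  define F where "F = (\<lambda>(i,j). if i < n \<and> j < n then A $$ (i,j)
     else if n \<le> i \<and> n \<le> j then B $$ (i - n, j - n)
     else if (i = p \<and> j = n + q) \<or> (i = n + q \<and> j = p) then -1 else (0::int))"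
  have G: "glue A p B q = mat (n+m) (n+m) F" unfolding glue_def F_def using A B by auto
  define F1 where "F1 = (\<lambda>(i,j). if i = p then (if j = n + q then 0 else F (p,j)) else F (i,j))"
  define F2 where "F2 = (\<lambda>(i,j). if i = p then (if j = n + q then -1 else 0) else F (i,j))"
  have s1: "det (mat (n+m) (n+m) F) = det (mat (n+m) (n+m) F1) + det (mat (n+m) (n+m) F2)"
    unfolding F1_def F2_def
    by (rule det_split, insert p, auto simp: F_def)
  define F11 where "F11 = (\<lambda>(i,j). if i = n + q then (if j = p then 0 else F1 (n+q,j)) else F1 (i,j))"
  define F12 where "F12 = (\<lambda>(i,j). if i = n + q then (if j = p then -1 else 0) else F1 (i,j))"
  define F21 where "F21 = (\<lambda>(i,j). if i = n + q then (if j = p then 0 else F2 (n+q,j)) else F2 (i,j))"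
  define F22 where "F22 = (\<lambda>(i,j). if i = n + q then (if j = p then -1 else 0) else F2 (i,j))"
  have s2: "det (mat (n+m) (n+m) F1) = det (mat (n+m) (n+m) F11) + det (mat (n+m) (n+m) F12)"
    unfolding F11_def F12_def
    by (rule det_split, insert p q, auto simp: F_def F1_def)
  have s3: "det (mat (n+m) (n+m) F2) = det (mat (n+m) (n+m) F21) + det (mat (n+m) (n+m) F22)"
    unfolding F21_def F22_def
    by (rule det_split, insert p q, auto simp: F_def F2_def)
  have d11: "det (mat (n+m) (n+m) F11) = det A * det B"
  proof -
    have "mat (n+m) (n+m) F11 = four_block_mat A (0\<^sub>m n m) (0\<^sub>m m n) B"
      by (rule eq_matI, insert A B p q, auto simp: F11_def F1_def F_def)
    thus ?thesis using det_four_block_mat_lower_left_zero[OF A _ refl B] by simp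
  qed
  have d12: "det (mat (n+m) (n+m) F12) = 0"
  proof -
    have "mat (n+m) (n+m) F12 = four_block_mat A (0\<^sub>m n m) 
       (mat m n (\<lambda>(i,j). if i = q \<and> j = p then -1 else 0)) (mat m m (\<lambda>(i,j). if i = q then 0 else B $$ (i,j)))"
      by (rule eq_matI, insert A B p q, auto simp: F12_def F1_def F_def)
    thus ?thesis using det_four_block_mat_upper_right_zero[OF A refl, of _ m] det_zero_row[OF B q] by simp
  qed
  have d21: "det (mat (n+m) (n+m) F21) = 0"
  proof -
    have "mat (n+m) (n+m) F21 = four_block_mat (mat n n (\<lambda>(i,j). if i = p then 0 else A $$ (i,j)))
       (mat n m (\<lambda>(i,j). if i = p \<and> j = q then -1 else 0)) (0\<^sub>m m n) B"
      by (rule eq_matI, insert A B p q, auto simp: F21_def F2_def F_def)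
    thus ?thesis using det_four_block_mat_lower_left_zero[OF _ _ refl B, of _ n] det_zero_row[OF A p] by simp
  qed
  have d22: "det (mat (n+m) (n+m) F22) = - (det (mat_delete A p p) * det (mat_delete B q q))"
  proof -
    let ?A = "mat n n (\<lambda>(i,j). if i = p then (if j = p then -1 else 0) else A $$ (i,j))"
    let ?B = "mat m m (\<lambda>(i,j). if i = q then (if j = q then -1 else 0) else B $$ (i,j))"
    have "swaprows p (n+q) (mat (n+m) (n+m) F22) = four_block_mat ?A (0\<^sub>m n m) (0\<^sub>m m n) ?B"
      by (rule eq_matI, insert A B p q, auto simp: F22_def F2_def F_def)
    moreover have "det (swaprows p (n+q) (mat (n+m) (n+m) F22)) = - det (mat (n+m) (n+m) F22)"
      by (rule det_swaprows[of _ "n+m"], insert p q, auto)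
    moreover have "det (four_block_mat ?A (0\<^sub>m n m) (0\<^sub>m m n) ?B) = det ?A * det ?B"
      by (rule det_four_block_mat_lower_left_zero, auto)
    ultimately show ?thesis using det_unit_row[OF A p, of "-1"] det_unit_row[OF B q, of "-1"] by simp
  qed
  show ?thesis unfolding G using s1 s2 s3 d11 d12 d21 d22 by simp
qed


fun W :: "int mat \<Rightarrow> nat \<Rightarrow> nat \<Rightarrow> int mat" where
  "W A x 0 = A"
| "W A x (Suc k) = glue (mat 1 1 (\<lambda>_. 2)) 0 (W A x k) (if k = 0 then x else 0)"

lemma W_carrier: "A \<in> carrier_mat n n \<Longrightarrow> W A x k \<in> carrier_mat (k+n) (k+n)"
  by (induction k) (auto simp: glue_def)

lemma delete_glue1: "mat_delete (glue (mat 1 1 (\<lambda>_. 2)) 0 B q) 0 0 = B" if "B \<in> carrier_mat m m"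
  by (rule eq_matI, insert that, auto simp: glue_def mat_delete_def)

definition Wf :: "int mat \<Rightarrow> nat \<Rightarrow> nat \<Rightarrow> nat \<times> nat \<Rightarrow> int" where
  "Wf A x k = (\<lambda>(i,j). if k \<le> i \<and> k \<le> j then A $$ (i-k, j-k)
     else if i < k \<and> j < k then (if i = j then 2 else if i = j+1 \<or> j = i+1 then -1 else 0)
     else if (i+1 = k \<and> j = k+x) \<or> (j+1 = k \<and> i = k+x) then -1 else 0)"

lemma glue_index: assumes "A \<in> carrier_mat n n" "B \<in> carrier_mat m m" "i < n + m" "j < n + m"
  shows "glue A p B q $$ (i,j) = (if i < n \<and> j < n then A $$ (i,j)
     else if n \<le> i \<and> n \<le> j then B $$ (i - n, j - n)
     else if (i = p \<and> j = n + q) \<or> (i = n + q \<and> j = p) then -1 else 0)"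
  using assms unfolding glue_def by auto

lemma Wf_shift: "Wf A x (Suc k) (Suc i, Suc j) = Wf A x k (i,j)"
  unfolding Wf_def by auto

lemma W_index:
  assumes A: "A \<in> carrier_mat n n" and x: "x < n"
  shows "i < k + n \<Longrightarrow> j < k + n \<Longrightarrow> W A x k $$ (i,j) = Wf A x k (i,j)"
proof (induction k arbitrary: i j)
  case 0 then show ?case by (simp add: Wf_def)
next
  case (Suc k)
  have C: "W A x k \<in> carrier_mat (k+n) (k+n)" by (rule W_carrier[OF A])
  have C1: "mat 1 1 (\<lambda>_. 2::int) \<in> carrier_mat 1 1" by simp
  have gi: "W A x (Suc k) $$ (i,j) = (if i < 1 \<and> j < 1 then 2
     else if 1 \<le> i \<and> 1 \<le> j then W A x k $$ (i - 1, j - 1)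
     else if (i = 0 \<and> j = 1 + (if k = 0 then x else 0)) \<or> (i = 1 + (if k = 0 then x else 0) \<and> j = 0) then -1 else 0)"
    using glue_index[OF C1 C, of i j 0 "if k = 0 then x else 0"] Suc.prems by simp
  show ?case
  proof (cases "i = 0 \<or> j = 0")
    case True
    then show ?thesis unfolding gi by (cases k) (auto simp: Wf_def)
  next
    case False
    then obtain i' j' where ii: "i = Suc i'" "j = Suc j'" by (metis not0_implies_Suc)
    show ?thesis unfolding gi using Suc ii by (simp add: Wf_shift)
  qed
qed



lemma det_W_step:
  assumes A: "A \<in> carrier_mat n n" and x: "x < n"
  shows "det (W A x (Suc k)) = 2 * det (W A x k) - det (mat_delete (W A x k) (if k = 0 then x else 0) (if k = 0 then x else 0))"
proof -
  have C: "W A x k \<in> carrier_mat (k+n) (k+n)" by (rule W_carrier[OF A])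
  have C1: "mat 1 1 (\<lambda>_. 2::int) \<in> carrier_mat 1 1" by simp
  have q: "(if k = 0 then x else 0) < k + n" using x by auto
  have d1: "det (mat 1 1 (\<lambda>_. 2::int)) = 2" using det_single[OF C1] C1 by (simp del: One_nat_def)
  have d0: "det (mat_delete (mat 1 1 (\<lambda>_. 2::int)) 0 0) = 1"
  proof -
    have "mat_delete (mat 1 1 (\<lambda>_. 2::int)) 0 0 \<in> carrier_mat 0 0" using mat_delete_carrier[OF C1, of 0 0] by simp
    thus ?thesis by (rule det_dim_zero)
  qed
  have e: "W A x (Suc k) = glue (mat 1 1 (\<lambda>_. 2)) 0 (W A x k) (if k = 0 then x else 0)" by simp
  have "det (glue (mat 1 1 (\<lambda>_. 2)) 0 (W A x k) (if k = 0 then x else 0)) =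
     det (mat 1 1 (\<lambda>_. 2::int)) * det (W A x k) - det (mat_delete (mat 1 1 (\<lambda>_. 2::int)) 0 0) * det (mat_delete (W A x k) (if k = 0 then x else 0) (if k = 0 then x else 0))"
    by (rule det_glue[OF C1 C _ q]) simp
  then show ?thesis unfolding e d1 d0 by simp
qed

lemma det_W:
  assumes A: "A \<in> carrier_mat n n" and x: "x < n"
  shows "det (W A x k) = det A + int k * Delta A x \<and> det (W A x (Suc k)) = det A + int (Suc k) * Delta A x"
proof (induction k)
  case 0
  have "det (W A x (Suc 0)) = 2 * det A - det (mat_delete A x x)" using det_W_step[OF A x, of 0] by simp
  then show ?case by (simp add: Delta_def del_node_def)
next
  case (Suc k)
  have C: "W A x k \<in> carrier_mat (k+n) (k+n)" by (rule W_carrier[OF A])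
  have "det (W A x (Suc (Suc k))) = 2 * det (W A x (Suc k)) - det (mat_delete (W A x (Suc k)) 0 0)"
    using det_W_step[OF A x, of "Suc k"] by simp
  also have "mat_delete (W A x (Suc k)) 0 0 = W A x k" using delete_glue1[OF C] by simp
  finally show ?case using Suc by (simp add: algebra_simps)
qed

lemma Zk_glue:
  assumes A1: "A1 \<in> carrier_mat n1 n1" and A2: "A2 \<in> carrier_mat n2 n2"
    and x1: "x1 < n1" and x2: "x2 < n2" and k: "k \<ge> 1"
  shows "Zk A1 x1 A2 x2 k = glue A1 x1 (W A2 x2 k) 0"
proof -
  have C: "W A2 x2 k \<in> carrier_mat (k+n2) (k+n2)" by (rule W_carrier[OF A2])
  have dg: "glue A1 x1 (W A2 x2 k) 0 \<in> carrier_mat (n1 + (k+n2)) (n1 + (k+n2))"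
    using A1 C unfolding glue_def by simp
  have dz: "Zk A1 x1 A2 x2 k \<in> carrier_mat (n1 + (k+n2)) (n1 + (k+n2))"
    using A1 A2 unfolding Zk_def Let_def carrier_mat_def by (simp add: add.assoc)
  show ?thesis
  proof (rule eq_matI)
    fix i j assume ij: "i < dim_row (glue A1 x1 (W A2 x2 k) 0)" "j < dim_col (glue A1 x1 (W A2 x2 k) 0)"
    hence ij: "i < n1 + (k + n2)" "j < n1 + (k + n2)" using dg by auto
    have g: "glue A1 x1 (W A2 x2 k) 0 $$ (i,j) = (if i < n1 \<and> j < n1 then A1 $$ (i,j)
     else if n1 \<le> i \<and> n1 \<le> j then W A2 x2 k $$ (i - n1, j - n1)
     else if (i = x1 \<and> j = n1 + 0) \<or> (i = n1 + 0 \<and> j = x1) then -1 else 0)"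
      by (rule glue_index[OF A1 C ij])
    have Z: "Zk A1 x1 A2 x2 k $$ (i,j) = (if i < n1 \<and> j < n1 then A1 $$ (i,j)
       else if n1 + k \<le> i \<and> n1 + k \<le> j then A2 $$ (i - (n1+k), j - (n1+k))
       else if n1 \<le> i \<and> i < n1 + k \<and> n1 \<le> j \<and> j < n1 + k then
         (if i = j then 2 else if i = j + 1 \<or> j = i + 1 then -1 else 0)
       else if (i = x1 \<and> j = n1) \<or> (i = n1 \<and> j = x1) then -1
       else if (i = n1 + k - 1 \<and> j = n1 + k + x2) \<or> (j = n1 + k - 1 \<and> i = n1 + k + x2) then -1
       else 0)" proof -
      have d: "dim_row A1 = n1" "dim_row A2 = n2" using A1 A2 by auto
      have ij2: "i < n1 + k + n2" "j < n1 + k + n2" using ij by auto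
      show ?thesis unfolding Zk_def Let_def d
        by (subst index_mat(1)[OF ij2], simp only: prod.case)
    qed
    show "Zk A1 x1 A2 x2 k $$ (i,j) = glue A1 x1 (W A2 x2 k) 0 $$ (i,j)"
    proof (cases "n1 \<le> i \<and> n1 \<le> j")
      case True
      then obtain i' j' where ii: "i = n1 + i'" "j = n1 + j'" by (metis le_Suc_ex)
      have ij': "i' < k + n2" "j' < k + n2" using ij ii by auto
      have "glue A1 x1 (W A2 x2 k) 0 $$ (i,j) = Wf A2 x2 k (i', j')" 
        unfolding g using W_index[OF A2 x2 ij'] ii by simp
      also have "\<dots> = Zk A1 x1 A2 x2 k $$ (i,j)"
      proof (cases "k \<le> i' \<and> k \<le> j'")
        case True then show ?thesis unfolding Z unfolding Wf_def ii by simp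
      next
        case F1: False
        show ?thesis
        proof (cases "i' < k \<and> j' < k")
          case True then show ?thesis using F1 unfolding Z unfolding Wf_def ii by simp
        next
          case False
          have e1: "(n1 + i' = x1 \<and> n1 + j' = n1 \<or> n1 + i' = n1 \<and> n1 + j' = x1) = False" using x1 by auto
          have e2: "(n1 + i' = n1 + k - 1 \<and> n1 + j' = n1 + k + x2 \<or> n1 + j' = n1 + k - 1 \<and> n1 + i' = n1 + k + x2)
             = (i' + 1 = k \<and> j' = k + x2 \<or> j' + 1 = k \<and> i' = k + x2)" using k by auto
          show ?thesis using F1 False unfolding Z unfolding Wf_def ii by (simp only: e1 e2 if_False if_True, auto)
        qed
      qed
      finally show ?thesis by simp
    next
      case False
      show ?thesis
      proof (cases "i < n1 \<and> j < n1")
        case True then show ?thesis unfolding g Z by simp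
      next
        case F2: False
        have e3: "(n1 + k \<le> i \<and> n1 + k \<le> j) = False" using False by auto
        have e4: "(n1 \<le> i \<and> i < n1 + k \<and> n1 \<le> j \<and> j < n1 + k) = False" using False by auto
        have e5: "((i = n1 + k - 1 \<and> j = n1 + k + x2) \<or> (j = n1 + k - 1 \<and> i = n1 + k + x2)) = False" 
          using False k by auto
        show ?thesis unfolding g Z e3 e4 e5 if_False add_0_right using F2 False x1 by auto
      qed
    qed
  qed (insert dg dz, auto)
qed

lemma coprime_add_mul:
  fixes a b t :: int
  assumes "coprime a b" shows "coprime a (b + a * t)"
proof (rule coprimeI)
  fix c assume c: "c dvd a" "c dvd b + a * t"
  hence "c dvd b" by (metis dvd_add_left_iff dvd_mult2)
  thus "is_unit c" using c(1) assms coprime_common_divisor by blast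
qed

theorem lemma3p8:
  fixes A1 A2 :: "int mat" and \<xi>1 \<xi>2 k :: nat
  assumes "extensible_pair A1 \<xi>1 A2 \<xi>2"
    and "k \<ge> 1"
  shows "gcd (Delta A1 \<xi>1 * Delta A2 \<xi>2) (det (Zk A1 \<xi>1 A2 \<xi>2 k)) = 1"
proof -
  have M: "gen_cartan A1" "gen_cartan A2" "\<xi>1 < dim_row A1" "\<xi>2 < dim_row A2"
    "gcd (det A1) (Delta A1 \<xi>1) = 1" "gcd (det A2) (Delta A2 \<xi>2) = 1" "gcd (Delta A1 \<xi>1) (Delta A2 \<xi>2) = 1"
    using assms(1) unfolding extensible_pair_def marked_dynkin_def by auto
  have E: "dim_row A1 = dim_col A1" "dim_row A2 = dim_col A2" "\<xi>1 < dim_row A1" "\<xi>2 < dim_row A2"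
    "gcd (det A1) (Delta A1 \<xi>1) = 1" "gcd (det A2) (Delta A2 \<xi>2) = 1" "gcd (Delta A1 \<xi>1) (Delta A2 \<xi>2) = 1"
    using M(1)[unfolded gen_cartan_def, THEN conjunct1] M(2)[unfolded gen_cartan_def, THEN conjunct1] M(3-7) by auto
  define n1 where "n1 = dim_row A1"
  define n2 where "n2 = dim_row A2"
  have A1: "A1 \<in> carrier_mat n1 n1" unfolding n1_def carrier_mat_def using E(1) by simp
  have A2: "A2 \<in> carrier_mat n2 n2" unfolding n2_def carrier_mat_def using E(2) by simp
  have x1: "\<xi>1 < n1" and x2: "\<xi>2 < n2" unfolding n1_def n2_def using E(3,4) by simp_all
  obtain k' where k: "k = Suc k'" using assms(2) by (metis Suc_pred' less_eq_Suc_le One_nat_def)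
  have C: "W A2 \<xi>2 k \<in> carrier_mat (k+n2) (k+n2)" by (rule W_carrier[OF A2])
  have C': "W A2 \<xi>2 k' \<in> carrier_mat (k'+n2) (k'+n2)" by (rule W_carrier[OF A2])
  have q: "0 < k + n2" using k by simp
  define D1 where "D1 = det A1"
  define D2 where "D2 = det A2"
  define e1 where "e1 = Delta A1 \<xi>1"
  define e2 where "e2 = Delta A2 \<xi>2"
  have d1: "det (mat_delete A1 \<xi>1 \<xi>1) = D1 - e1" unfolding D1_def e1_def Delta_def del_node_def by simp
  have g1: "det (Zk A1 \<xi>1 A2 \<xi>2 k) = det (glue A1 \<xi>1 (W A2 \<xi>2 k) 0)"
    using Zk_glue[OF A1 A2 x1 x2 assms(2)] by simp
  have g2: "det (glue A1 \<xi>1 (W A2 \<xi>2 k) 0) = det A1 * det (W A2 \<xi>2 k) - det (mat_delete A1 \<xi>1 \<xi>1) * det (mat_delete (W A2 \<xi>2 k) 0 0)"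
    by (rule det_glue[OF A1 C x1 q])
  have g3: "mat_delete (W A2 \<xi>2 k) 0 0 = W A2 \<xi>2 k'" unfolding k using delete_glue1[OF C'] by simp
  have g4: "det (W A2 \<xi>2 k) = D2 + int k * e2" using det_W[OF A2 x2, of k] D2_def e2_def by simp
  have g5: "det (W A2 \<xi>2 k') = D2 + int k' * e2" using det_W[OF A2 x2, of k'] D2_def e2_def by simp
  have Z0: "det (Zk A1 \<xi>1 A2 \<xi>2 k) = D1 * (D2 + int k * e2) - (D1 - e1) * (D2 + int k' * e2)"
    unfolding g1 g2 g3 g4 g5 d1 D1_def ..
  have Z: "det (Zk A1 \<xi>1 A2 \<xi>2 k) = D1 * e2 + e1 * (D2 + int k' * e2)"
    using Z0 k by (simp add: algebra_simps)
  have c1: "coprime e1 D1" "coprime e1 e2" "coprime e2 D2"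
    using E(5-7) unfolding D1_def D2_def e1_def e2_def coprime_iff_gcd_eq_1 by (auto simp: gcd.commute)
  have "coprime e1 (D1 * e2 + e1 * (D2 + int k' * e2))"
    by (rule coprime_add_mul, insert c1, auto)
  moreover have "D1 * e2 + e1 * (D2 + int k' * e2) = e1 * D2 + e2 * (D1 + int k' * e1)"
    by (simp add: algebra_simps)
  moreover have "coprime e2 (e1 * D2 + e2 * (D1 + int k' * e1))"
    by (rule coprime_add_mul, insert c1, auto simp: coprime_commute)
  ultimately have "coprime (e1 * e2) (det (Zk A1 \<xi>1 A2 \<xi>2 k))" unfolding Z by simp
  thus ?thesis unfolding e1_def e2_def coprime_iff_gcd_eq_1 .
qed

end
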